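(* Let $T\ge 1$ be an integer and $p^*\in(0,1]$. For integers $l\ge1$ and $0\le n\le l-1$ with $l-n\le T$ put $P^l_D(n)=\frac{\prod_{i=0}^{l-n-1}(1-\frac{i}{T})}{T^{n}}$. For $l\ge1$ let $n^*_l$ be the least $n\in\{0,\dots,l-1\}$ with $P^l_D(n)\le p^*$, if such $n$ exists (otherwise $n^*_l$ is undefined). Let $l_{max}$ be the least $l\in\{1,\dots,T\}$ with $P^l_D(0)\le p^*$, and assume $l_{max}\le \lfloor T-\sqrt{T}\rfloor+1$. Then for every $l$ with $2\le l\le l_{max}$ such that $n^*_{l-1}$ is defined, $n^*_l$ is defined and $n^*_{l-1}\le n^*_l+1$.
   Context: $p^*$ is the threshold probability for a random device to share a given device ID. *)

theory Defs
  imports Complex_Main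
begin

definition PD :: "nat \<Rightarrow> nat \<Rightarrow> nat \<Rightarrow> real" where
  "PD T l n = (\<Prod>i<l - n. 1 - real i / real T) / real T ^ n"

text \<open>Candidates for n*_l: n in {0..l-1} where P^l_D(n) is defined (l - n \<le> T) and \<le> p*.
  n*_l is defined iff this set is nonempty, and then it is its least element.\<close>
definition nstar_set :: "nat \<Rightarrow> real \<Rightarrow> nat \<Rightarrow> nat set" where
  "nstar_set T p l = {n. n \<le> l - 1 \<and> l - n \<le> T \<and> PD T l n \<le> p}"

definition nstar :: "nat \<Rightarrow> real \<Rightarrow> nat \<Rightarrow> nat" where
  "nstar T p l = (LEAST n. n \<in> nstar_set T p l)"

end

theory Submission
  imports Defs
begin

lemma key_ineq:
  fixes T :: nat and k :: nat
  assumes T1: "T \<ge> 1" and kb: "real k + 2 \<le> real T - sqrt (real T) + 1"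
  shows "1 / real T \<le> (1 - real k / real T) * (1 - real (Suc k) / real T)"
proof -
  define s where "s = sqrt (real T)"
  have s0: "s \<ge> 0" unfolding s_def by simp
  have ss: "s * s = real T" unfolding s_def by simp
  have Tp: "real T > 0" using T1 by simp
  have h1: "real T - real (Suc k) \<ge> s" using kb unfolding s_def by simp
  have h2: "real T - real k \<ge> s + 1" using kb unfolding s_def by simp
  have "(real T - real k) * (real T - real (Suc k)) \<ge> (s + 1) * s"
    using h1 h2 s0 by (intro mult_mono) auto
  hence pr: "(real T - real k) * (real T - real (Suc k)) \<ge> real T"
    using ss s0 by (simp add: algebra_simps)
  have "(1 - real k / real T) * (1 - real (Suc k) / real T)
      = (real T - real k) * (real T - real (Suc k)) / (real T * real T)"
    using Tp by (simp add: field_simps)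
  also have "\<dots> \<ge> real T / (real T * real T)"
    using pr Tp by (intro divide_right_mono) auto
  finally show ?thesis using Tp by (simp add: field_simps)
qed

theorem corollary1:
  fixes T lmax :: nat and p :: real
  assumes "T \<ge> 1"
    and "0 < p" and "p \<le> 1"
    and "1 \<le> lmax" and "lmax \<le> T" and "PD T lmax 0 \<le> p"
    and "\<forall>l. 1 \<le> l \<and> l < lmax \<longrightarrow> PD T l 0 > p"
    and "real lmax \<le> real_of_int \<lfloor>real T - sqrt (real T)\<rfloor> + 1"
  shows "\<forall>l. 2 \<le> l \<and> l \<le> lmax \<and> nstar_set T p (l - 1) \<noteq> {} \<longrightarrow>
           nstar_set T p l \<noteq> {} \<and> nstar T p (l - 1) \<le> nstar T p l + 1"
proof (intro allI impI)
  fix l assume H: "2 \<le> l \<and> l \<le> lmax \<and> nstar_set T p (l - 1) \<noteq> {}"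
  define Q where "Q a = (\<Prod>i<a. 1 - real i / real T)" for a
  have Tp: "real T > 0" using assms(1) by simp
  have PDQ: "PD T l' n' = Q (l' - n') / real T ^ n'" for l' n' unfolding PD_def Q_def by simp
  have Qnn: "Q a \<ge> 0" if "a \<le> T" for a
    unfolding Q_def using that Tp by (intro prod_nonneg) (auto simp: field_simps)
  obtain m where m: "m \<in> nstar_set T p (l - 1)" using H by blast
  have mS: "m \<le> l - 2" "l - 1 - m \<le> T" "PD T (l - 1) m \<le> p"
    using m H unfolding nstar_set_def by auto
  have "PD T l (m + 1) = PD T (l - 1) m / real T"
    unfolding PDQ using H by (simp add: field_simps)
  also have "\<dots> \<le> p / real T" using mS(3) Tp by (simp add: divide_right_mono)
  also have "\<dots> \<le> p" using assms(1,2) by (simp add: divide_le_eq)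
  finally have "m + 1 \<in> nstar_set T p l" unfolding nstar_set_def using mS H by auto
  hence ne: "nstar_set T p l \<noteq> {}" by blast
  define n where "n = nstar T p l"
  have nS: "n \<in> nstar_set T p l" unfolding n_def nstar_def using \<open>m + 1 \<in> _\<close> by (rule LeastI)
  have nl1: "nstar T p (l - 1) \<le> m" unfolding nstar_def using m by (rule Least_le)
  show "nstar_set T p l \<noteq> {} \<and> nstar T p (l - 1) \<le> nstar T p l + 1"
  proof (cases "n + 3 \<le> l")
    case False
    then show ?thesis using ne nl1 mS(1) n_def by auto
  next
    case True
    define k where "k = l - n - 2"
    have lk: "l - n = Suc (Suc k)" "l - 1 - (n + 1) = k" using True k_def by auto
    have nS': "l - n \<le> T" "PD T l n \<le> p" using nS unfolding nstar_set_def by auto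
    have kT: "k \<le> T" using lk nS' by simp
    have "real lmax \<le> real T - sqrt (real T) + 1"
      using assms(8) of_int_floor_le[of "real T - sqrt (real T)"] by linarith
    moreover have "k + 2 \<le> lmax" using H lk by linarith
    ultimately have kb: "real k + 2 \<le> real T - sqrt (real T) + 1" by linarith
    have "PD T (l - 1) (n + 1) = Q k / real T ^ n * (1 / real T)"
      unfolding PDQ lk by simp
    also have "\<dots> \<le> Q k / real T ^ n * ((1 - real k / real T) * (1 - real (Suc k) / real T))"
      using key_ineq[OF assms(1) kb] Qnn[OF kT] Tp by (intro mult_left_mono) auto
    also have "\<dots> = PD T l n" unfolding PDQ lk Q_def by simp
    finally have "n + 1 \<in> nstar_set T p (l - 1)"
      unfolding nstar_set_def using nS' True lk by auto
    hence "nstar T p (l - 1) \<le> n + 1" unfolding nstar_def by (rule Least_le)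
    then show ?thesis using ne n_def by simp
  qed
qed

end
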